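(* Let $n\ge 2$, $\mathbf A\in\mathcal G_n$, and let \[T=\{(u,V)\in\mathcal D(U(\mathbf A),\mathbf 2)\times\mathcal P(\{0,\dots,n-1\}) : 0,n-1\in V \text{ and } |{\uparrow}u|+1=|V|\}.\] Define $\iota_{\mathbf A}\colon\mathcal G_n(\mathbf A,\mathbf C_n)\to T$ by $\iota_{\mathbf A}(x)=(\omega\circ x,\operatorname{ran}x)$, and define $\gamma_{\mathbf A}$ on $T$ as follows: if $(u,V)\in T$ and $V=\{i_0,i_1,\dots,i_m\}$ with $0=i_0<i_1<\dots<i_m=n-1$, then for $a\in A$, $\gamma_{\mathbf A}(u,V)(a)=i_k$ where $k=|\{v\in{\uparrow}u: v(a)=1\}|$. Then $\iota_{\mathbf A}$ is a well-defined map into $T$, $\gamma_{\mathbf A}$ is a well-defined map from $T$ into $\mathcal G_n(\mathbf A,\mathbf C_n)$, and $\iota_{\mathbf A}$ and $\gamma_{\mathbf A}$ are mutually inverse bijections. In particular, the map $x\mapsto\omega\circ x$ is a surjection from $\mathcal G_n(\mathbf A,\mathbf C_n)$ onto $\mathcal D(U(\mathbf A),\mathbf 2)$.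
   Context: Fix an integer $n\ge 2$. $\mathbf C_n$ is the Heyting algebra whose universe is the chain $\{0<1<\dots<n-1\}$, with lattice operations min and max, $\bot=0$, $\top=n-1$, and $a\to b=\top$ if $a\le b$, $a\to b=b$ if $b<a$. $\mathcal G_n$ denotes the class of algebras isomorphic to subalgebras of direct powers of $\mathbf C_n$. For $\mathbf A\in\mathcal G_n$, $\mathcal G_n(\mathbf A,\mathbf C_n)$ is the set of Heyting algebra homomorphisms $\mathbf A\to\mathbf C_n$, and $\operatorname{ran}x$ is the image of $x$. $U(\mathbf A)$ is the bounded distributive lattice reduct of $\mathbf A$; $\mathbf 2$ is the two-element bounded lattice; $\mathcal D(U(\mathbf A),\mathbf 2)$ is the set of bounded-lattice homomorphisms $U(\mathbf A)\to\mathbf 2$, ordered pointwise, and ${\uparrow}u$ is the set of elements $\ge u$. $\omega\colon U(\mathbf C_n)\to\mathbf 2$ is the lattice homomorphism with $\omega(\top)=1$ and $\omega(k)=0$ for $k<\top$. $\mathcal P(\{0,\dots,n-1\})$ is the power set of $\{0,\dots,n-1\}$. *)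

theory Defs
  imports "HOL-Library.FuncSet"
begin

record 'a heyting_alg =
  carrier :: "'a set"
  meet :: "'a \<Rightarrow> 'a \<Rightarrow> 'a"
  join :: "'a \<Rightarrow> 'a \<Rightarrow> 'a"
  himp :: "'a \<Rightarrow> 'a \<Rightarrow> 'a"
  hbot :: 'a
  htop :: 'a

text \<open>The chain C_n on {0,...,n-1}.\<close>
definition C_imp :: "nat \<Rightarrow> nat \<Rightarrow> nat \<Rightarrow> nat" where
  "C_imp n a b = (if a \<le> b then n - 1 else b)"

definition in_Gn :: "nat \<Rightarrow> 'i set \<Rightarrow> 'a heyting_alg \<Rightarrow> bool" where
  "in_Gn n I A \<longleftrightarrow>
     (\<forall>a\<in>carrier A. \<forall>b\<in>carrier A.
        meet A a b \<in> carrier A \<and> join A a b \<in> carrier A \<and> himp A a b \<in> carrier A) \<and>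
     hbot A \<in> carrier A \<and> htop A \<in> carrier A \<and>
     (\<exists>h. h \<in> carrier A \<rightarrow> (I \<rightarrow>\<^sub>E {..<n}) \<and> inj_on h (carrier A) \<and>
        (\<forall>a\<in>carrier A. \<forall>b\<in>carrier A.
           h (meet A a b) = (\<lambda>i\<in>I. min (h a i) (h b i)) \<and>
           h (join A a b) = (\<lambda>i\<in>I. max (h a i) (h b i)) \<and>
           h (himp A a b) = (\<lambda>i\<in>I. C_imp n (h a i) (h b i))) \<and>
        h (hbot A) = (\<lambda>i\<in>I. 0) \<and> h (htop A) = (\<lambda>i\<in>I. n - 1))"

definition Hom_C :: "nat \<Rightarrow> 'a heyting_alg \<Rightarrow> ('a \<Rightarrow> nat) set" where
  "Hom_C n A = {x \<in> carrier A \<rightarrow>\<^sub>E {..<n}.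
      (\<forall>a\<in>carrier A. \<forall>b\<in>carrier A.
         x (meet A a b) = min (x a) (x b) \<and>
         x (join A a b) = max (x a) (x b) \<and>
         x (himp A a b) = C_imp n (x a) (x b)) \<and>
      x (hbot A) = 0 \<and> x (htop A) = n - 1}"

text \<open>Bounded-lattice homomorphisms U(A) \<rightarrow> 2, with 2 = bool (False < True).\<close>
definition D2 :: "'a heyting_alg \<Rightarrow> ('a \<Rightarrow> bool) set" where
  "D2 A = {u \<in> carrier A \<rightarrow>\<^sub>E (UNIV :: bool set).
      (\<forall>a\<in>carrier A. \<forall>b\<in>carrier A.
         u (meet A a b) = (u a \<and> u b) \<and> u (join A a b) = (u a \<or> u b)) \<and>
      u (hbot A) = False \<and> u (htop A) = True}"

definition up2 :: "'a heyting_alg \<Rightarrow> ('a \<Rightarrow> bool) \<Rightarrow> ('a \<Rightarrow> bool) set" where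
  "up2 A u = {v \<in> D2 A. \<forall>a\<in>carrier A. u a \<longrightarrow> v a}"

definition omega :: "nat \<Rightarrow> nat \<Rightarrow> bool" where
  "omega n k = (k = n - 1)"

definition T_set :: "nat \<Rightarrow> 'a heyting_alg \<Rightarrow> (('a \<Rightarrow> bool) \<times> nat set) set" where
  "T_set n A = {(u, V). u \<in> D2 A \<and> V \<subseteq> {..<n} \<and> 0 \<in> V \<and> n - 1 \<in> V \<and>
                   card (up2 A u) + 1 = card V}"

definition iota :: "nat \<Rightarrow> 'a heyting_alg \<Rightarrow> ('a \<Rightarrow> nat) \<Rightarrow> ('a \<Rightarrow> bool) \<times> nat set" where
  "iota n A x = (\<lambda>a\<in>carrier A. omega n (x a), x ` carrier A)"

text \<open>gamma(u,V)(a) = i_k, the k-th smallest element of V (counting from 0),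
  where k = |{v \<in> up u. v(a) = 1}|.\<close>
definition gamma :: "'a heyting_alg \<Rightarrow> ('a \<Rightarrow> bool) \<times> nat set \<Rightarrow> ('a \<Rightarrow> nat)" where
  "gamma A t = (case t of (u, V) \<Rightarrow>
      (\<lambda>a\<in>carrier A. sorted_list_of_set V ! card {v \<in> up2 A u. v a}))"

end

theory Submission
  imports Defs
begin


lemma card_less_nth:
  fixes L :: "nat list"
  assumes s: "sorted_wrt (<) L" and k: "k < length L"
  shows "card {j \<in> set L. j < L ! k} = k"
proof -
  have d: "distinct L" using s strict_sorted_iff by blast
  have "{j \<in> set L. j < L ! k} = (!) L ` {..<k}"
  proof (intro equalityI subsetI)
    fix j assume "j \<in> {j \<in> set L. j < L ! k}"
    then obtain i where i: "i < length L" "j = L ! i" "L ! i < L ! k" by (auto simp: in_set_conv_nth)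
    have "i < k"
    proof (rule ccontr)
      assume "\<not> i < k"
      then have "k < i \<or> k = i" by auto
      moreover have "L ! k < L ! i" if "k < i" using s i k that by (simp add: sorted_wrt_iff_nth_less)
      ultimately show False using i by auto
    qed
    then show "j \<in> (!) L ` {..<k}" using i by auto
  next
    fix j assume "j \<in> (!) L ` {..<k}"
    then obtain i where "i < k" "j = L ! i" by auto
    then show "j \<in> {j \<in> set L. j < L ! k}" using s k by (auto simp: sorted_wrt_iff_nth_less)
  qed
  moreover have "inj_on ((!) L) {..<k}" using d k by (auto simp: inj_on_def nth_eq_iff_index_eq)
  ultimately show ?thesis by (simp add: card_image)
qed

definition idx :: "nat set \<Rightarrow> nat \<Rightarrow> nat" where
  "idx W y = card {j \<in> W. j < y}"

lemma idx_props:
  assumes f: "finite W" and y: "y \<in> W"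
  shows "idx W y < card W" "sorted_list_of_set W ! idx W y = y"
proof -
  let ?L = "sorted_list_of_set W"
  have s: "sorted_wrt (<) ?L" using f by (simp add: strict_sorted_list_of_set)
  have st: "set ?L = W" using f by simp
  obtain k where k: "k < length ?L" "?L ! k = y" using y st by (metis in_set_conv_nth)
  have "idx W y = k" using card_less_nth[OF s k(1)] k st by (simp add: idx_def)
  then show "idx W y < card W" "?L ! idx W y = y" using k f by auto
qed

lemma idx_mono:
  assumes f: "finite W" and y: "y \<in> W" and z: "y < z"
  shows "idx W y < idx W z"
proof -
  have "{j \<in> W. j < y} \<subset> {j \<in> W. j < z}" using y z by auto
  then show ?thesis unfolding idx_def using f by (intro psubset_card_mono) auto
qed

lemma idx_image:
  assumes f: "finite W"
  shows "idx W ` W = {..<card W}"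
proof -
  have inj: "inj_on (idx W) W"
  proof (rule inj_onI)
    fix x y assume "x \<in> W" "y \<in> W" "idx W x = idx W y"
    then show "x = y" using idx_mono[OF f] by (metis linorder_neqE_nat less_irrefl)
  qed
  have "idx W ` W \<subseteq> {..<card W}" using idx_props(1)[OF f] by auto
  moreover have "card (idx W ` W) = card {..<card W}" using card_image[OF inj] by simp
  ultimately show ?thesis by (simp add: card_subset_eq)
qed

lemma nth_sorted_image:
  assumes f: "finite W"
  shows "(!) (sorted_list_of_set W) ` {..<card W} = W"
proof -
  have "(!) (sorted_list_of_set W) ` {..<length (sorted_list_of_set W)} = set (sorted_list_of_set W)"
    by (auto simp: in_set_conv_nth)
  then show ?thesis using f by simp
qed

lemma nth_sorted_mono:
  assumes f: "finite W" and "i < j" "j < card W"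
  shows "sorted_list_of_set W ! i < sorted_list_of_set W ! j"
  using assms strict_sorted_list_of_set[of W] by (auto simp: sorted_wrt_iff_nth_less)




locale GA =
  fixes n :: nat and I :: "'i set" and A :: "'a heyting_alg" and h :: "'a \<Rightarrow> 'i \<Rightarrow> nat"
  assumes n2: "n \<ge> 2"
    and cl_meet: "\<And>a b. a \<in> carrier A \<Longrightarrow> b \<in> carrier A \<Longrightarrow> meet A a b \<in> carrier A"
    and cl_join: "\<And>a b. a \<in> carrier A \<Longrightarrow> b \<in> carrier A \<Longrightarrow> join A a b \<in> carrier A"
    and cl_imp: "\<And>a b. a \<in> carrier A \<Longrightarrow> b \<in> carrier A \<Longrightarrow> himp A a b \<in> carrier A"
    and cl_bot: "hbot A \<in> carrier A" and cl_top: "htop A \<in> carrier A"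
    and h_fun: "h \<in> carrier A \<rightarrow> (I \<rightarrow>\<^sub>E {..<n})"
    and h_inj: "inj_on h (carrier A)"
    and h_meet: "\<And>a b. a \<in> carrier A \<Longrightarrow> b \<in> carrier A \<Longrightarrow> h (meet A a b) = (\<lambda>i\<in>I. min (h a i) (h b i))"
    and h_join: "\<And>a b. a \<in> carrier A \<Longrightarrow> b \<in> carrier A \<Longrightarrow> h (join A a b) = (\<lambda>i\<in>I. max (h a i) (h b i))"
    and h_imp: "\<And>a b. a \<in> carrier A \<Longrightarrow> b \<in> carrier A \<Longrightarrow> h (himp A a b) = (\<lambda>i\<in>I. C_imp n (h a i) (h b i))"
    and h_bot: "h (hbot A) = (\<lambda>i\<in>I. 0)" and h_top: "h (htop A) = (\<lambda>i\<in>I. n - 1)"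
begin

lemma eqI:
  assumes "s \<in> carrier A" "t \<in> carrier A" "\<And>i. i \<in> I \<Longrightarrow> h s i = h t i"
  shows "s = t"
proof -
  have "h s \<in> I \<rightarrow>\<^sub>E {..<n}" "h t \<in> I \<rightarrow>\<^sub>E {..<n}" using h_fun assms by auto
  then have "h s = h t" using assms(3) by (intro ext) (metis PiE_arb)
  then show ?thesis using h_inj assms(1,2) by (auto dest: inj_onD)
qed

lemma hlt: "a \<in> carrier A \<Longrightarrow> i \<in> I \<Longrightarrow> h a i < n"
  using h_fun by auto

lemmas hs = h_meet h_join h_imp h_bot h_top
lemmas cls = cl_meet cl_join cl_imp cl_bot cl_top

lemma pt_id1: "p < n \<Longrightarrow> C_imp n p p = n - 1"
  using n2 by (auto simp: C_imp_def min_def max_def)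

lemma id1: "a \<in> carrier A \<Longrightarrow> himp A a a = htop A"
  by (rule eqI) (simp_all add: hs cls hlt pt_id1)

lemma pt_id2: "p < n \<Longrightarrow> q < n \<Longrightarrow> min p (C_imp n p q) = min p q"
  using n2 by (auto simp: C_imp_def min_def max_def)

lemma id2: "a \<in> carrier A \<Longrightarrow> b \<in> carrier A \<Longrightarrow> meet A a (himp A a b) = meet A a b"
  by (rule eqI) (simp_all add: hs cls hlt pt_id2)

lemma pt_id3: "p < n \<Longrightarrow> q < n \<Longrightarrow> C_imp n p (min p q) = C_imp n p q"
  using n2 by (auto simp: C_imp_def min_def max_def)

lemma id3: "a \<in> carrier A \<Longrightarrow> b \<in> carrier A \<Longrightarrow> himp A a (meet A a b) = himp A a b"
  by (rule eqI) (simp_all add: hs cls hlt pt_id3)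

lemma pt_id4: "p < n \<Longrightarrow> q < n \<Longrightarrow> C_imp n (min p q) p = n - 1"
  using n2 by (auto simp: C_imp_def min_def max_def)

lemma id4: "a \<in> carrier A \<Longrightarrow> b \<in> carrier A \<Longrightarrow> himp A (meet A a b) a = htop A"
  by (rule eqI) (simp_all add: hs cls hlt pt_id4)

lemma pt_id5: "p < n \<Longrightarrow> q < n \<Longrightarrow> C_imp n (max p q) q = C_imp n p q"
  using n2 by (auto simp: C_imp_def min_def max_def)

lemma id5: "a \<in> carrier A \<Longrightarrow> b \<in> carrier A \<Longrightarrow> himp A (join A a b) b = himp A a b"
  by (rule eqI) (simp_all add: hs cls hlt pt_id5)

lemma pt_id6: "p < n \<Longrightarrow> q < n \<Longrightarrow> C_imp n q (max p q) = n - 1"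
  using n2 by (auto simp: C_imp_def min_def max_def)

lemma id6: "a \<in> carrier A \<Longrightarrow> b \<in> carrier A \<Longrightarrow> himp A b (join A a b) = htop A"
  by (rule eqI) (simp_all add: hs cls hlt pt_id6)

lemma pt_id7: "p < n \<Longrightarrow> q < n \<Longrightarrow> max (C_imp n (C_imp n p q) q) (C_imp n p q) = n - 1"
  using n2 by (auto simp: C_imp_def min_def max_def)

lemma id7: "a \<in> carrier A \<Longrightarrow> b \<in> carrier A \<Longrightarrow> join A (himp A (himp A a b) b) (himp A a b) = htop A"
  by (rule eqI) (simp_all add: hs cls hlt pt_id7)

lemma pt_id8: "p < n \<Longrightarrow> q < n \<Longrightarrow> C_imp n q (C_imp n p q) = n - 1"
  using n2 by (auto simp: C_imp_def min_def max_def)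

lemma id8: "a \<in> carrier A \<Longrightarrow> b \<in> carrier A \<Longrightarrow> himp A b (himp A a b) = htop A"
  by (rule eqI) (simp_all add: hs cls hlt pt_id8)

lemma pt_id9: "p < n \<Longrightarrow> q < n \<Longrightarrow> r < n \<Longrightarrow> min (min (C_imp n p q) (C_imp n q r)) (C_imp n p r) = min (C_imp n p q) (C_imp n q r)"
  using n2 by (auto simp: C_imp_def min_def max_def)

lemma id9: "a \<in> carrier A \<Longrightarrow> b \<in> carrier A \<Longrightarrow> c \<in> carrier A \<Longrightarrow> meet A (meet A (himp A a b) (himp A b c)) (himp A a c) = meet A (himp A a b) (himp A b c)"
  by (rule eqI) (simp_all add: hs cls hlt pt_id9)

lemma pt_id10: "p < n \<Longrightarrow> C_imp n (n - Suc 0) p = p"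
  using n2 by (auto simp: C_imp_def min_def max_def)

lemma id10: "a \<in> carrier A \<Longrightarrow> himp A (htop A) a = a"
  by (rule eqI) (simp_all add: hs cls hlt pt_id10)

lemma pt_id11: "p < n \<Longrightarrow> q < n \<Longrightarrow> max (C_imp n p q) (C_imp n q p) = n - 1"
  using n2 by (auto simp: C_imp_def min_def max_def)

lemma id11: "a \<in> carrier A \<Longrightarrow> b \<in> carrier A \<Longrightarrow> join A (himp A a b) (himp A b a) = htop A"
  by (rule eqI) (simp_all add: hs cls hlt pt_id11)

lemma pt_id12: "p < n \<Longrightarrow> C_imp n 0 p = n - 1"
  using n2 by (auto simp: C_imp_def min_def max_def)

lemma id12: "a \<in> carrier A \<Longrightarrow> himp A (hbot A) a = htop A"
  by (rule eqI) (simp_all add: hs cls hlt pt_id12)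

lemma pt_id13: "p < n \<Longrightarrow> q < n \<Longrightarrow> min p (C_imp n q p) = p"
  using n2 by (auto simp: C_imp_def min_def max_def)

lemma id13: "a \<in> carrier A \<Longrightarrow> b \<in> carrier A \<Longrightarrow> meet A a (himp A b a) = a"
  by (rule eqI) (simp_all add: hs cls hlt pt_id13)

lemma pt_id14: "p < n \<Longrightarrow> C_imp n p (n - Suc 0) = n - Suc 0"
  using n2 by (auto simp: C_imp_def min_def max_def)

lemma id14: "a \<in> carrier A \<Longrightarrow> himp A a (htop A) = htop A"
  by (rule eqI) (simp_all add: hs cls hlt pt_id14)

lemma pt_id15: "p < n \<Longrightarrow> q < n \<Longrightarrow> C_imp n p (max p q) = n - 1"
  using n2 by (auto simp: C_imp_def min_def max_def)

lemma id15: "a \<in> carrier A \<Longrightarrow> b \<in> carrier A \<Longrightarrow> himp A a (join A a b) = htop A"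
  by (rule eqI) (simp_all add: hs cls hlt pt_id15)

lemma pt_id16: "p < n \<Longrightarrow> q < n \<Longrightarrow> C_imp n (min p q) q = n - 1"
  using n2 by (auto simp: C_imp_def min_def max_def)

lemma id16: "a \<in> carrier A \<Longrightarrow> b \<in> carrier A \<Longrightarrow> himp A (meet A a b) b = htop A"
  by (rule eqI) (simp_all add: hs cls hlt pt_id16)

end



context GA begin

lemma D2D:
  assumes "u \<in> D2 A"
  shows "\<And>a b. a \<in> carrier A \<Longrightarrow> b \<in> carrier A \<Longrightarrow> u (meet A a b) = (u a \<and> u b)"
    "\<And>a b. a \<in> carrier A \<Longrightarrow> b \<in> carrier A \<Longrightarrow> u (join A a b) = (u a \<or> u b)"
    "u (hbot A) = False" "u (htop A) = True"
    "u \<in> carrier A \<rightarrow>\<^sub>E (UNIV :: bool set)"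
  using assms unfolding D2_def by auto

lemma u_mp:
  assumes "u \<in> D2 A" "a \<in> carrier A" "b \<in> carrier A" "u a" "u (himp A a b)"
  shows "u b"
proof -
  have "u (meet A a (himp A a b)) = u (meet A a b)" using id2 assms by simp
  then show ?thesis using assms D2D(1)[OF assms(1)] cls by auto
qed

lemma u_trans:
  assumes "u \<in> D2 A" "a \<in> carrier A" "b \<in> carrier A" "c \<in> carrier A"
    "u (himp A a b)" "u (himp A b c)"
  shows "u (himp A a c)"
proof -
  have "u (meet A (meet A (himp A a b) (himp A b c)) (himp A a c)) = u (meet A (himp A a b) (himp A b c))"
    using id9 assms by simp
  then show ?thesis using assms D2D(1)[OF assms(1)] cls by auto
qed

lemma u_total:
  assumes "u \<in> D2 A" "a \<in> carrier A" "b \<in> carrier A"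
  shows "u (himp A a b) \<or> u (himp A b a)"
proof -
  have "u (join A (himp A a b) (himp A b a))" using id11 assms D2D(4)[OF assms(1)] by simp
  then show ?thesis using assms D2D(2)[OF assms(1)] cls by auto
qed

lemma u_up:
  assumes "u \<in> D2 A" "a \<in> carrier A" "c \<in> carrier A" "u a"
  shows "u (himp A c a)"
proof -
  have "u (meet A a (himp A c a)) = u a" using id13 assms by simp
  then show ?thesis using assms D2D(1)[OF assms(1)] cls by auto
qed

lemma HomD:
  assumes "x \<in> Hom_C n A"
  shows "\<And>a b. a \<in> carrier A \<Longrightarrow> b \<in> carrier A \<Longrightarrow> x (meet A a b) = min (x a) (x b)"
    "\<And>a b. a \<in> carrier A \<Longrightarrow> b \<in> carrier A \<Longrightarrow> x (join A a b) = max (x a) (x b)"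
    "\<And>a b. a \<in> carrier A \<Longrightarrow> b \<in> carrier A \<Longrightarrow> x (himp A a b) = C_imp n (x a) (x b)"
    "x (hbot A) = 0" "x (htop A) = n - 1"
    "x \<in> carrier A \<rightarrow>\<^sub>E {..<n}"
  using assms unfolding Hom_C_def by auto

definition om :: "('a \<Rightarrow> nat) \<Rightarrow> 'a \<Rightarrow> bool" where
  "om x = (\<lambda>a\<in>carrier A. omega n (x a))"

definition thr :: "('a \<Rightarrow> nat) \<Rightarrow> nat \<Rightarrow> 'a \<Rightarrow> bool" where
  "thr x j = (\<lambda>a\<in>carrier A. j \<le> x a)"

lemma om_D2:
  assumes "x \<in> Hom_C n A"
  shows "om x \<in> D2 A"
proof -
  have lt: "\<And>a. a \<in> carrier A \<Longrightarrow> x a < n" using HomD(6)[OF assms] by auto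
  show ?thesis unfolding D2_def om_def using n2
    by (auto simp: HomD[OF assms] cls omega_def min_def max_def dest: lt)
qed

lemma thr_D2:
  assumes "x \<in> Hom_C n A" "j \<in> x ` carrier A" "j \<noteq> 0"
  shows "thr x j \<in> D2 A"
proof -
  have "j < n" using HomD(6)[OF assms(1)] assms(2) by auto
  then show ?thesis unfolding D2_def thr_def using assms(3)
    by (auto simp: HomD[OF assms(1)] cls)
qed

lemma up2_hom:
  assumes x: "x \<in> Hom_C n A"
  shows "up2 A (om x) = thr x ` (x ` carrier A - {0})"
proof (intro equalityI subsetI)
  fix v assume "v \<in> up2 A (om x)"
  then have v: "v \<in> D2 A" and uv: "\<And>a. a \<in> carrier A \<Longrightarrow> om x a \<Longrightarrow> v a"
    unfolding up2_def by auto
  have key: "v b" if "a \<in> carrier A" "b \<in> carrier A" "x a \<le> x b" "v a" for a b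
  proof -
    have "x (himp A a b) = n - 1" using HomD(3)[OF x that(1,2)] that(3) by (simp add: C_imp_def)
    then have "om x (himp A a b)" using that cls by (simp add: om_def omega_def)
    then have "v (himp A a b)" using uv[of "himp A a b"] cl_imp[OF that(1,2)] by simp
    then show ?thesis using u_mp[OF v that(1,2) that(4)] by simp
  qed
  define S where "S = x ` {a \<in> carrier A. v a}"
  have "x (htop A) \<in> S" unfolding S_def using D2D(4)[OF v] cl_top by simp
  moreover have fS: "finite S"
  proof -
    have xl: "\<And>a. a \<in> carrier A \<Longrightarrow> x a < n" using HomD(6)[OF x] by (simp add: PiE_iff)
    have "S \<subseteq> {..<n}" unfolding S_def using xl by auto
    then show ?thesis by (rule finite_subset) simp
  qed
  ultimately have MS: "Min S \<in> S" by (intro Min_in) auto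
  obtain a0 where a1: "a0 \<in> {a \<in> carrier A. v a}" "Min S = x a0" using MS unfolding S_def by (rule imageE)
  from a1 have a0: "a0 \<in> carrier A" "v a0" "x a0 = Min S" by simp_all
  define j where "j = Min S"
  have j0: "j \<noteq> 0"
  proof
    assume "j = 0"
    then have "x a0 \<le> x (hbot A)" using a0(3) HomD(4)[OF x] j_def by simp
    then have "v (hbot A)" using key[OF a0(1) cl_bot _ a0(2)] by simp
    then show False using D2D(3)[OF v] by simp
  qed
  have "v = thr x j"
  proof (rule ext)
    fix b show "v b = thr x j b"
    proof (cases "b \<in> carrier A")
      case True
      have "v b \<longleftrightarrow> j \<le> x b"
      proof
        assume "v b" then have "x b \<in> S" using True unfolding S_def by blast
        then show "j \<le> x b" unfolding j_def by (rule Min_le[OF fS])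
      next
        assume "j \<le> x b" then show "v b" using key[OF a0(1) True] a0(2,3) j_def by simp
      qed
      then show ?thesis using True by (simp add: thr_def)
    next
      case False
      have "v b = undefined" using D2D(5)[OF v] False by (rule PiE_arb)
      moreover have "thr x j b = undefined" using False by (simp add: thr_def)
      ultimately show ?thesis by simp
    qed
  qed
  moreover have "j \<in> x ` carrier A - {0}"
  proof -
    have "x a0 \<in> x ` carrier A" using a0(1) by (rule imageI)
    then show ?thesis using a0(3) j_def j0 by simp
  qed
  ultimately show "v \<in> thr x ` (x ` carrier A - {0})" by (simp only: imageI)
next
  fix v assume "v \<in> thr x ` (x ` carrier A - {0})"
  then obtain j where j: "j \<in> x ` carrier A" "j \<noteq> 0" "v = thr x j" by auto
  have "j < n" using HomD(6)[OF x] j(1) by auto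
  then have "\<forall>a\<in>carrier A. om x a \<longrightarrow> v a" using j by (auto simp: om_def omega_def thr_def)
  then show "v \<in> up2 A (om x)" using thr_D2[OF x j(1,2)] j(3) by (simp add: up2_def)
qed

lemma thr_inj:
  shows "inj_on (thr x) (x ` carrier A)"
proof (rule inj_onI)
  fix j k assume j: "j \<in> x ` carrier A" and k: "k \<in> x ` carrier A" and e: "thr x j = thr x k"
  obtain a where a: "a \<in> carrier A" "j = x a" using j by blast
  obtain b where b: "b \<in> carrier A" "k = x b" using k by blast
  have "thr x j a = thr x k a" "thr x j b = thr x k b" using e by simp_all
  then have "k \<le> j" "j \<le> k" using a b by (simp_all add: thr_def)
  then show "j = k" by simp
qed

lemma ran_fin: "x \<in> Hom_C n A \<Longrightarrow> finite (x ` carrier A)"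
proof -
  assume x: "x \<in> Hom_C n A"
  have xl: "\<forall>a\<in>carrier A. x a < n" using HomD(6)[OF x] by (simp add: PiE_iff)
  have "x ` carrier A \<subseteq> {..<n}" using xl by auto
  then show ?thesis by (rule finite_subset) simp
qed

lemma card_up:
  assumes x: "x \<in> Hom_C n A"
  shows "card (up2 A (om x)) + 1 = card (x ` carrier A)"
proof -
  have "card (up2 A (om x)) = card (x ` carrier A - {0})"
    unfolding up2_hom[OF x] by (rule card_image) (meson Diff_subset inj_on_subset thr_inj)
  moreover have z: "0 \<in> x ` carrier A" using HomD(4)[OF x] cl_bot by force
  moreover have "card (x ` carrier A) > 0" using z ran_fin[OF x] card_gt_0_iff by blast
  ultimately show ?thesis using ran_fin[OF x] by (simp add: card_Diff_singleton)
qed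

lemma count_up:
  assumes x: "x \<in> Hom_C n A" and a: "a \<in> carrier A"
  shows "card {v \<in> up2 A (om x). v a} = idx (x ` carrier A) (x a)"
proof -
  let ?W = "x ` carrier A"
  have "{v \<in> up2 A (om x). v a} = thr x ` {j \<in> ?W - {0}. j \<le> x a}"
    unfolding up2_hom[OF x] using a by (auto simp: thr_def)
  moreover have "inj_on (thr x) {j \<in> ?W - {0}. j \<le> x a}"
    by (rule inj_on_subset[OF thr_inj]) auto
  ultimately have "card {v \<in> up2 A (om x). v a} = card {j \<in> ?W - {0}. j \<le> x a}"
    by (simp add: card_image)
  also have "{j \<in> ?W - {0}. j \<le> x a} = {j \<in> ?W. j \<le> x a} - {0}" by auto
  also have "card \<dots> = card {j \<in> ?W. j \<le> x a} - 1"
    using HomD(4)[OF x] cl_bot ran_fin[OF x] by (intro card_Diff_singleton) force+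
  also have "\<dots> = card ({j \<in> ?W. j \<le> x a} - {x a})"
    using a ran_fin[OF x] by (intro card_Diff_singleton[symmetric]) auto
  also have "{j \<in> ?W. j \<le> x a} - {x a} = {j \<in> ?W. j < x a}" by auto
  finally show ?thesis by (simp add: idx_def)
qed

end



fun Jl :: "'a heyting_alg \<Rightarrow> 'a list \<Rightarrow> 'a" where
  "Jl A (p # q # r) = join A (himp A p q) (Jl A (q # r))"
| "Jl A _ = hbot A"

context GA begin

lemma pt_id17: "p < n \<Longrightarrow> q < n \<Longrightarrow> C_imp n q (min p q) = C_imp n q p"
  using n2 by (auto simp: C_imp_def min_def max_def)

lemma id17: "a \<in> carrier A \<Longrightarrow> b \<in> carrier A \<Longrightarrow> himp A b (meet A a b) = himp A b a"
  by (rule eqI) (simp_all add: hs cls hlt pt_id17)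

lemma pt_id18: "p < n \<Longrightarrow> q < n \<Longrightarrow> C_imp n (max p q) p = C_imp n q p"
  using n2 by (auto simp: C_imp_def min_def max_def)

lemma id18: "a \<in> carrier A \<Longrightarrow> b \<in> carrier A \<Longrightarrow> himp A (join A a b) a = himp A b a"
  by (rule eqI) (simp_all add: hs cls hlt pt_id18)

lemma Jl_carrier: "set bs \<subseteq> carrier A \<Longrightarrow> Jl A bs \<in> carrier A"
  by (induction bs rule: induct_list012) (simp_all add: cls)

lemma Jl_h: "set bs \<subseteq> carrier A \<Longrightarrow> i \<in> I \<Longrightarrow> \<not> successively (\<lambda>p q. h q i < h p i) bs
   \<Longrightarrow> h (Jl A bs) i = n - 1"
proof (induction bs rule: induct_list012)
  case (3 p q r)
  have c: "p \<in> carrier A" "q \<in> carrier A" "set r \<subseteq> carrier A" using 3(3) by auto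
  have jc: "Jl A (q # r) \<in> carrier A" using c by (intro Jl_carrier) simp
  have e: "h (Jl A (p # q # r)) i = max (C_imp n (h p i) (h q i)) (h (Jl A (q # r)) i)"
    using c jc 3(4) by (simp add: hs cls)
  have lt: "h (Jl A (q # r)) i < n" using hlt[OF jc 3(4)] .
  show ?case
  proof (cases "h q i < h p i")
    case True
    then have "\<not> successively (\<lambda>p q. h q i < h p i) (q # r)" using 3(5) by simp
    then have "h (Jl A (q # r)) i = n - 1" using 3(2) c 3(4) by simp
    then show ?thesis using e lt hlt[OF c(2) 3(4)] by (simp add: C_imp_def)
  next
    case False
    then show ?thesis using e lt hlt[OF c(2) 3(4)] by (simp add: C_imp_def)
  qed
qed simp_all

lemma succ_len: "successively (\<lambda>p q. h q i < h p i) bs \<Longrightarrow> bs \<noteq> [] \<Longrightarrow> length bs \<le> h (hd bs) i + 1"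
proof (induction bs rule: induct_list012)
  case (3 p q r)
  then show ?case by simp
qed simp_all

end

locale GU = GA +
  fixes u
  assumes uD: "u \<in> D2 A"
begin

abbreviation "dn p q \<equiv> \<not> u (himp A p q)"

lemma Jl_u: "set bs \<subseteq> carrier A \<Longrightarrow> u (Jl A bs) \<Longrightarrow> \<not> successively (\<lambda>p q. dn p q) bs"
proof (induction bs rule: induct_list012)
  case 1 then show ?case using D2D(3)[OF uD] by simp
next
  case (2 x) then show ?case using D2D(3)[OF uD] by simp
next
  case (3 p q r)
  have c: "p \<in> carrier A" "q \<in> carrier A" "set r \<subseteq> carrier A" using 3(3) by auto
  have jc: "Jl A (q # r) \<in> carrier A" using c by (intro Jl_carrier) simp
  have "u (himp A p q) \<or> u (Jl A (q # r))" using 3(4) D2D(2)[OF uD] c jc cl_imp by simp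
  then show ?case using 3(2) c by auto
qed

lemma bound:
  assumes s: "set bs \<subseteq> carrier A" and l: "n < length bs"
  shows "\<not> successively (\<lambda>p q. dn p q) bs"
proof -
  have "Jl A bs = htop A"
  proof (rule eqI)
    show "Jl A bs \<in> carrier A" using s by (rule Jl_carrier)
    show "htop A \<in> carrier A" by (rule cl_top)
    fix i assume i: "i \<in> I"
    have "\<not> successively (\<lambda>p q. h q i < h p i) bs"
    proof
      assume sc: "successively (\<lambda>p q. h q i < h p i) bs"
      have ne: "bs \<noteq> []" using l by auto
      have "hd bs \<in> carrier A" using s ne by auto
      then have "h (hd bs) i < n" using hlt i by simp
      then show False using succ_len[OF sc ne] l by simp
    qed
    then show "h (Jl A bs) i = h (htop A) i" using Jl_h[OF s i] i by (simp add: h_top)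
  qed
  then show ?thesis using Jl_u[OF s] D2D(4)[OF uD] by simp
qed


definition chn where
  "chn cs a \<longleftrightarrow> set cs \<subseteq> carrier A \<and> successively (\<lambda>p q. dn p q) (cs @ [a])"

definition Lens where
  "Lens a = length ` {cs. chn cs a}"

definition ht where
  "ht a = Max (Lens a)"

lemma chn_len:
  assumes a: "a \<in> carrier A" and c: "chn cs a"
  shows "length cs \<le> n - 1"
proof -
  have "set (cs @ [a]) \<subseteq> carrier A" using a c by (simp add: chn_def)
  moreover have "successively (\<lambda>p q. dn p q) (cs @ [a])" using c by (simp add: chn_def)
  ultimately have "\<not> n < length (cs @ [a])" using bound by blast
  then show ?thesis by simp
qed

lemma Lens_fin: "a \<in> carrier A \<Longrightarrow> finite (Lens a)"
proof -
  assume a: "a \<in> carrier A"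
  have "Lens a \<subseteq> {..n - 1}" unfolding Lens_def using chn_len[OF a] by auto
  then show ?thesis by (rule finite_subset) simp
qed

lemma Lens0: "0 \<in> Lens a"
proof -
  have "chn [] a" by (simp add: chn_def)
  then show ?thesis unfolding Lens_def by (intro image_eqI[of _ _ "[]"]) simp_all
qed

lemma ht_in: "a \<in> carrier A \<Longrightarrow> ht a \<in> Lens a"
  unfolding ht_def using Lens_fin Lens0 by (intro Max_in) auto

lemma ht_ge: "a \<in> carrier A \<Longrightarrow> k \<in> Lens a \<Longrightarrow> k \<le> ht a"
  unfolding ht_def using Lens_fin by (intro Max_ge) auto

lemma ht_le: "a \<in> carrier A \<Longrightarrow> ht a \<le> n - 1"
proof -
  assume a: "a \<in> carrier A"
  obtain cs where "chn cs a" "ht a = length cs" using ht_in[OF a] unfolding Lens_def by (rule imageE) simp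
  then show ?thesis using chn_len[OF a] by simp
qed

lemma H1:
  assumes a: "a \<in> carrier A" and b: "b \<in> carrier A" and ab: "u (himp A a b)"
  shows "ht b \<le> ht a"
proof -
  have "Lens b \<subseteq> Lens a"
  proof
    fix k assume "k \<in> Lens b"
    then obtain cs where cs: "chn cs b" "k = length cs" unfolding Lens_def by (rule imageE) simp
    have "chn cs a"
    proof (cases "cs = []")
      case True then show ?thesis by (simp add: chn_def)
    next
      case False
      have sc: "set cs \<subseteq> carrier A" "successively (\<lambda>p q. dn p q) cs" "dn (last cs) b"
        using cs(1) False by (simp_all add: chn_def successively_append_iff)
      have lc: "last cs \<in> carrier A" using sc(1) False by auto
      have "dn (last cs) a"
      proof
        assume "u (himp A (last cs) a)"
        then have "u (himp A (last cs) b)" using u_trans[OF uD lc a b] ab by simp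
        then show False using sc(3) by simp
      qed
      then show ?thesis using sc False by (simp add: chn_def successively_append_iff)
    qed
    then show "k \<in> Lens a" unfolding Lens_def using cs(2) by (intro image_eqI[of _ _ cs]) simp_all
  qed
  then show ?thesis unfolding ht_def using Lens_fin[OF a] Lens0[of b] by (intro Max_mono) auto
qed

lemma H2:
  assumes a: "a \<in> carrier A" and b: "b \<in> carrier A" and ba: "dn b a"
  shows "ht b + 1 \<le> ht a"
proof -
  obtain cs where cs: "chn cs b" "ht b = length cs" using ht_in[OF b] unfolding Lens_def by (rule imageE) simp
  have "chn (cs @ [b]) a" using cs(1) b ba by (simp add: chn_def successively_append_iff)
  then have "length (cs @ [b]) \<in> Lens a" unfolding Lens_def by (intro imageI) simp
  then show ?thesis using ht_ge[OF a] cs(2) by fastforce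
qed

lemma H3:
  assumes a: "a \<in> carrier A" and ua: "u a"
  shows "ht a = 0"
proof -
  have "Lens a \<subseteq> {0}"
  proof
    fix k assume "k \<in> Lens a"
    then obtain cs where cs: "chn cs a" "k = length cs" unfolding Lens_def by (rule imageE) simp
    have "cs = []"
    proof (rule ccontr)
      assume ne: "cs \<noteq> []"
      have sc: "set cs \<subseteq> carrier A" "dn (last cs) a"
        using cs(1) ne by (simp_all add: chn_def successively_append_iff)
      have lc: "last cs \<in> carrier A" using sc(1) ne by auto
      show False using u_up[OF uD a lc ua] sc(2) by simp
    qed
    then show "k \<in> {0}" using cs(2) by simp
  qed
  then show ?thesis using ht_in[OF a] by auto
qed

lemma H4:
  assumes a: "a \<in> carrier A" and ua: "\<not> u a"
  shows "1 \<le> ht a"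
proof -
  have "chn [htop A] a" using ua id10[OF a] cl_top by (simp add: chn_def)
  then have "length [htop A] \<in> Lens a" unfolding Lens_def by (intro imageI) simp
  then show ?thesis using ht_ge[OF a] by fastforce
qed


definition X where
  "X = (\<lambda>a\<in>carrier A. if u (himp A a (hbot A)) then 0 else n - 1 - ht a)"

lemma ut: "u (htop A)" using D2D(4)[OF uD] by simp
lemma ub: "\<not> u (hbot A)" using D2D(3)[OF uD] by simp

lemma nonbot:
  assumes a: "a \<in> carrier A" and nb: "\<not> u (himp A a (hbot A))"
  shows "ht a + 1 \<le> n - 1"
  using H2[OF cl_bot a nb] ht_le[OF cl_bot] by simp

lemma X_order:
  assumes a: "a \<in> carrier A" and b: "b \<in> carrier A"
  shows "(X a \<le> X b) = u (himp A a b)"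
proof (cases "u (himp A a (hbot A))")
  case True
  have "u (himp A (hbot A) b)" using id12[OF b] ut by simp
  then have "u (himp A a b)" using u_trans[OF uD a cl_bot b] True by simp
  then show ?thesis using True a by (simp add: X_def)
next
  case Fa: False
  show ?thesis
  proof (cases "u (himp A b (hbot A))")
    case True
    have "\<not> u (himp A a b)"
    proof
      assume "u (himp A a b)"
      then have "u (himp A a (hbot A))" using u_trans[OF uD a b cl_bot] True by simp
      then show False using Fa by simp
    qed
    moreover have "X b = 0" using True b by (simp add: X_def)
    moreover have "X a \<noteq> 0" using Fa a nonbot[OF a Fa] by (simp add: X_def)
    ultimately show ?thesis by simp
  next
    case Fb: False
    have xa: "X a = n - 1 - ht a" "X b = n - 1 - ht b" using Fa Fb a b by (simp_all add: X_def)
    have l: "ht a \<le> n - 1" "ht b \<le> n - 1" using ht_le a b by auto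
    show ?thesis
    proof (cases "u (himp A a b)")
      case True
      then show ?thesis using H1[OF a b True] xa l by simp
    next
      case False
      then show ?thesis using H2[OF b a False] xa l by simp
    qed
  qed
qed

lemma X_top:
  assumes a: "a \<in> carrier A"
  shows "(X a = n - 1) = u a"
proof (cases "u (himp A a (hbot A))")
  case True
  have "\<not> u a" using u_mp[OF uD a cl_bot _ True] ub by blast
  then show ?thesis using True a n2 by (simp add: X_def)
next
  case False
  have xa: "X a = n - 1 - ht a" using False a by (simp add: X_def)
  have l: "ht a \<le> n - 1" using ht_le a by auto
  show ?thesis
  proof (cases "u a")
    case True then show ?thesis using H3[OF a True] xa by simp
  next
    case False then show ?thesis using H4[OF a False] xa l n2 by simp
  qed
qed

lemma X_lt: "a \<in> carrier A \<Longrightarrow> X a < n"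
  using n2 by (simp add: X_def)

lemma X_eqI:
  assumes "a \<in> carrier A" "b \<in> carrier A" "u (himp A a b)" "u (himp A b a)"
  shows "X a = X b"
  using X_order[OF assms(1,2)] X_order[OF assms(2,1)] assms(3,4) by simp

lemma X_hom: "X \<in> Hom_C n A"
proof -
  have pi: "X \<in> carrier A \<rightarrow>\<^sub>E {..<n}" using X_lt by (auto simp: X_def)
  have ops: "X (meet A a b) = min (X a) (X b) \<and> X (join A a b) = max (X a) (X b) \<and>
             X (himp A a b) = C_imp n (X a) (X b)" if a: "a \<in> carrier A" and b: "b \<in> carrier A" for a b
  proof (cases "u (himp A a b)")
    case True
    have le: "X a \<le> X b" using X_order[OF a b] True by simp
    have m: "X (meet A a b) = X a"
      using X_eqI[OF cl_meet[OF a b] a] id4[OF a b] id3[OF a b] True ut by simp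
    have j: "X (join A a b) = X b"
      using X_eqI[OF cl_join[OF a b] b] id5[OF a b] id6[OF a b] True ut by simp
    have i: "X (himp A a b) = n - 1" using X_top[OF cl_imp[OF a b]] True by simp
    show ?thesis using m j i le by (simp add: C_imp_def)
  next
    case False
    have tb: "u (himp A b a)" using u_total[OF uD a b] False by simp
    have le: "\<not> X a \<le> X b" using X_order[OF a b] False by simp
    have m: "X (meet A a b) = X b"
      using X_eqI[OF cl_meet[OF a b] b] id16[OF a b] id17[OF a b] tb ut by simp
    have j: "X (join A a b) = X a"
      using X_eqI[OF cl_join[OF a b] a] id18[OF a b] id15[OF a b] tb ut by simp
    have "u (join A (himp A (himp A a b) b) (himp A a b))" using id7[OF a b] ut by simp
    then have q: "u (himp A (himp A a b) b)"
      using D2D(2)[OF uD cl_imp[OF cl_imp[OF a b] b] cl_imp[OF a b]] False by simp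
    have i: "X (himp A a b) = X b"
      using X_eqI[OF cl_imp[OF a b] b] q id8[OF a b] ut by simp
    show ?thesis using m j i le by (simp add: C_imp_def)
  qed
  have bt: "X (hbot A) = 0" using cl_bot id1[OF cl_bot] ut by (simp add: X_def)
  have tp: "X (htop A) = n - 1" using X_top[OF cl_top] ut by simp
  show ?thesis unfolding Hom_C_def using pi ops bt tp by blast
qed

lemma om_X: "om X = u"
proof (rule ext)
  fix a show "om X a = u a"
  proof (cases "a \<in> carrier A")
    case True then show ?thesis using X_top[OF True] by (simp add: om_def omega_def)
  next
    case False
    have "u a = undefined" using D2D(5)[OF uD] False by (rule PiE_arb)
    then show ?thesis using False by (simp add: om_def)
  qed
qed

end



context GA begin

lemma surj_om: "u \<in> D2 A \<Longrightarrow> \<exists>x\<in>Hom_C n A. om x = u"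
proof -
  assume u: "u \<in> D2 A"
  interpret GU n I A h u by unfold_locales (rule u)
  show ?thesis using X_hom om_X by blast
qed

lemma iota_eq: "iota n A x = (om x, x ` carrier A)"
  by (simp add: iota_def om_def)

lemma ran_props:
  assumes x: "x \<in> Hom_C n A"
  shows "x ` carrier A \<subseteq> {..<n}" "0 \<in> x ` carrier A" "n - 1 \<in> x ` carrier A"
proof -
  have xl: "\<forall>a\<in>carrier A. x a < n" using HomD(6)[OF x] by (simp add: PiE_iff)
  then show "x ` carrier A \<subseteq> {..<n}" by auto
  show "0 \<in> x ` carrier A" using HomD(4)[OF x] cl_bot by (metis imageI)
  show "n - 1 \<in> x ` carrier A" using HomD(5)[OF x] cl_top by (metis imageI)
qed

lemma idx_top:
  assumes f: "finite W" and W: "W \<subseteq> {..<n}" and t: "n - 1 \<in> W"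
  shows "idx W (n - 1) = card W - 1"
proof -
  have "{j \<in> W. j < n - 1} = W - {n - 1}" using W by auto
  then show ?thesis using f t by (simp add: idx_def card_Diff_singleton)
qed

lemma idx_zero: "idx W 0 = 0"
  by (simp add: idx_def)

lemma part1:
  assumes x: "x \<in> Hom_C n A"
  shows "iota n A x \<in> T_set n A"
  using om_D2[OF x] ran_props[OF x] card_up[OF x] by (simp add: iota_eq T_set_def)

lemma part3:
  assumes x: "x \<in> Hom_C n A"
  shows "gamma A (iota n A x) = x"
proof (rule ext)
  fix a show "gamma A (iota n A x) a = x a"
  proof (cases "a \<in> carrier A")
    case True
    have "gamma A (iota n A x) a = sorted_list_of_set (x ` carrier A) ! idx (x ` carrier A) (x a)"
      using True count_up[OF x True] by (simp add: iota_eq gamma_def)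
    also have "\<dots> = x a" using idx_props(2)[OF ran_fin[OF x]] True by simp
    finally show ?thesis .
  next
    case False
    have "x a = undefined" using HomD(6)[OF x] False by (rule PiE_arb)
    then show ?thesis using False by (simp add: iota_eq gamma_def)
  qed
qed


lemma part24:
  assumes t: "t \<in> T_set n A"
  shows "gamma A t \<in> Hom_C n A \<and> iota n A (gamma A t) = t"
proof -
  obtain u V where tu: "t = (u, V)" by (cases t)
  have u: "u \<in> D2 A" and V: "V \<subseteq> {..<n}" "0 \<in> V" "n - 1 \<in> V" and cV: "card (up2 A u) + 1 = card V"
    using t tu by (auto simp: T_set_def)
  obtain x where x: "x \<in> Hom_C n A" and ux: "om x = u" using surj_om[OF u] by blast
  define W where "W = x ` carrier A"
  have fW: "finite W" using ran_fin[OF x] W_def by simp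
  have fV: "finite V" using V(1) by (rule finite_subset) simp
  have W: "W \<subseteq> {..<n}" "0 \<in> W" "n - 1 \<in> W" using ran_props[OF x] W_def by auto
  have cW: "card W = card V" using card_up[OF x] cV ux W_def by simp
  define L where "L = sorted_list_of_set V"
  define \<sigma> where "\<sigma> y = L ! idx W y" for y
  have lenL: "length L = card V" using fV L_def by simp
  have sV: "\<sigma> y \<in> V" if "y \<in> W" for y
  proof -
    have "idx W y < length L" using idx_props(1)[OF fW that] cW lenL by simp
    then have "L ! idx W y \<in> set L" by simp
    then show ?thesis using fV L_def \<sigma>_def by simp
  qed
  have smono: "\<sigma> y < \<sigma> z" if "y \<in> W" "z \<in> W" "y < z" for y z
  proof -
    have "idx W y < idx W z" using idx_mono[OF fW that(1,3)] .
    moreover have "idx W z < card V" using idx_props(1)[OF fW that(2)] cW by simp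
    ultimately show ?thesis using nth_sorted_mono[OF fV] L_def \<sigma>_def by simp
  qed
  have mono: "\<sigma> y \<le> \<sigma> z \<longleftrightarrow> y \<le> z" if "y \<in> W" "z \<in> W" for y z
    using smono[OF that] smono[OF that(2,1)] by (metis linorder_neqE_nat less_imp_le not_le order_refl)
  have s0: "\<sigma> 0 = 0"
    using idx_props(2)[OF fV V(2)] idx_zero L_def \<sigma>_def by simp
  have st: "\<sigma> (n - 1) = n - 1"
    using idx_props(2)[OF fV V(3)] idx_top[OF fV V(1,3)] idx_top[OF fW W(1,3)] cW L_def \<sigma>_def by simp
  have img: "\<sigma> ` W = V"
  proof -
    have "\<sigma> ` W = (!) L ` (idx W ` W)" unfolding \<sigma>_def by (simp add: image_image)
    also have "\<dots> = V" using idx_image[OF fW] cW nth_sorted_image[OF fV] L_def by simp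
    finally show ?thesis .
  qed
  have g: "gamma A t = (\<lambda>a\<in>carrier A. \<sigma> (x a))"
  proof (rule ext)
    fix a show "gamma A t a = (\<lambda>a\<in>carrier A. \<sigma> (x a)) a"
      using count_up[OF x] ux tu W_def L_def \<sigma>_def by (simp add: gamma_def)
  qed
  have xW: "\<And>a. a \<in> carrier A \<Longrightarrow> x a \<in> W" using W_def by simp
  have G: "(\<lambda>a\<in>carrier A. \<sigma> (x a)) \<in> Hom_C n A"
  proof -
    have pi: "(\<lambda>a\<in>carrier A. \<sigma> (x a)) \<in> carrier A \<rightarrow>\<^sub>E {..<n}"
      using sV xW V(1) by auto
    have ops: "\<sigma> (x (meet A a b)) = min (\<sigma> (x a)) (\<sigma> (x b)) \<and>
       \<sigma> (x (join A a b)) = max (\<sigma> (x a)) (\<sigma> (x b)) \<and>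
       \<sigma> (x (himp A a b)) = C_imp n (\<sigma> (x a)) (\<sigma> (x b))" if a: "a \<in> carrier A" and b: "b \<in> carrier A" for a b
    proof -
      have m: "mono_on W \<sigma>" using mono by (auto simp: mono_on_def)
      have "\<sigma> (x (meet A a b)) = min (\<sigma> (x a)) (\<sigma> (x b))"
        using HomD(1)[OF x a b] mono[OF xW[OF a] xW[OF b]] by (simp add: min_def)
      moreover have "\<sigma> (x (join A a b)) = max (\<sigma> (x a)) (\<sigma> (x b))"
        using HomD(2)[OF x a b] mono[OF xW[OF a] xW[OF b]] mono[OF xW[OF b] xW[OF a]] by (auto simp: max_def)
      moreover have "\<sigma> (x (himp A a b)) = C_imp n (\<sigma> (x a)) (\<sigma> (x b))"
        using HomD(3)[OF x a b] mono[OF xW[OF a] xW[OF b]] st by (simp add: C_imp_def)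
      ultimately show ?thesis by simp
    qed
    have bt: "\<sigma> (x (hbot A)) = 0" using HomD(4)[OF x] s0 by simp
    have tp: "\<sigma> (x (htop A)) = n - 1" using HomD(5)[OF x] st by simp
    show ?thesis unfolding Hom_C_def using pi ops bt tp cls by simp
  qed
  have io: "iota n A (gamma A t) = t"
  proof -
    have "om (\<lambda>a\<in>carrier A. \<sigma> (x a)) = om x"
    proof (rule ext)
      fix a show "om (\<lambda>a\<in>carrier A. \<sigma> (x a)) a = om x a"
      proof (cases "a \<in> carrier A")
        case True
        have "\<sigma> (x a) = n - 1 \<longleftrightarrow> x a = n - 1"
          using mono[OF xW[OF True] W(3)] mono[OF W(3) xW[OF True]] st by (metis order_antisym order_refl)
        then show ?thesis using True by (simp add: om_def omega_def)
      qed (simp add: om_def)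
    qed
    moreover have "(\<lambda>a\<in>carrier A. \<sigma> (x a)) ` carrier A = V"
      using img W_def by (auto simp: image_image)
    ultimately show ?thesis using g ux tu by (simp add: iota_eq)
  qed
  show ?thesis using G g io by simp
qed

end

theorem lemma2p2:
  fixes n :: nat and A :: "'a heyting_alg" and I :: "'i set"
  assumes "n \<ge> 2" and "in_Gn n I A"
  shows "(\<forall>x\<in>Hom_C n A. iota n A x \<in> T_set n A)
       \<and> (\<forall>t\<in>T_set n A. gamma A t \<in> Hom_C n A)
       \<and> (\<forall>x\<in>Hom_C n A. gamma A (iota n A x) = x)
       \<and> (\<forall>t\<in>T_set n A. iota n A (gamma A t) = t)
       \<and> bij_betw (iota n A) (Hom_C n A) (T_set n A)
       \<and> (\<lambda>x. \<lambda>a\<in>carrier A. omega n (x a)) ` Hom_C n A = D2 A"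
proof -
  have cl: "\<forall>a\<in>carrier A. \<forall>b\<in>carrier A.
        meet A a b \<in> carrier A \<and> join A a b \<in> carrier A \<and> himp A a b \<in> carrier A"
    "hbot A \<in> carrier A" "htop A \<in> carrier A"
    using assms(2) unfolding in_Gn_def by simp_all
  obtain h where h: "h \<in> carrier A \<rightarrow> (I \<rightarrow>\<^sub>E {..<n})" "inj_on h (carrier A)"
        "\<forall>a\<in>carrier A. \<forall>b\<in>carrier A.
           h (meet A a b) = (\<lambda>i\<in>I. min (h a i) (h b i)) \<and>
           h (join A a b) = (\<lambda>i\<in>I. max (h a i) (h b i)) \<and>
           h (himp A a b) = (\<lambda>i\<in>I. C_imp n (h a i) (h b i))"
        "h (hbot A) = (\<lambda>i\<in>I. 0)" "h (htop A) = (\<lambda>i\<in>I. n - 1)"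
    using assms(2) unfolding in_Gn_def by (elim conjE exE) (rule that)
  interpret GA n I A h
    by (rule GA.intro) (use assms(1) cl h in simp_all)
  have p1: "\<forall>x\<in>Hom_C n A. iota n A x \<in> T_set n A" using part1 by blast
  have p2: "\<forall>t\<in>T_set n A. gamma A t \<in> Hom_C n A" using part24 by blast
  have p3: "\<forall>x\<in>Hom_C n A. gamma A (iota n A x) = x" using part3 by blast
  have p4: "\<forall>t\<in>T_set n A. iota n A (gamma A t) = t" using part24 by blast
  have p5: "bij_betw (iota n A) (Hom_C n A) (T_set n A)"
    by (rule bij_betwI[where g = "gamma A"]) (use p1 p2 p3 p4 in auto)
  have p6: "(\<lambda>x. \<lambda>a\<in>carrier A. omega n (x a)) ` Hom_C n A = D2 A"
  proof
    show "(\<lambda>x. \<lambda>a\<in>carrier A. omega n (x a)) ` Hom_C n A \<subseteq> D2 A"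
      using om_D2 unfolding om_def by blast
    show "D2 A \<subseteq> (\<lambda>x. \<lambda>a\<in>carrier A. omega n (x a)) ` Hom_C n A"
    proof
      fix u assume "u \<in> D2 A"
      then obtain x where "x \<in> Hom_C n A" "om x = u" using surj_om by blast
      then show "u \<in> (\<lambda>x. \<lambda>a\<in>carrier A. omega n (x a)) ` Hom_C n A"
        unfolding om_def by blast
    qed
  qed
  show ?thesis using p1 p2 p3 p4 p5 p6 by blast
qed

end
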